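(* Let $q=rQ$ with $\gcd(r,Q)=1$, and suppose that $a_q,a_r,a_Q:\mathbb Z\to\mathbb C$ are functions of periods $q,r,Q$ respectively, bounded by $1$ in absolute value, with $a_q(n)=a_r(n)a_Q(n)$. Let $I$ be an interval of length $N$, and for a function $\phi$ set $\mathbb E(\phi):=\frac1N\sum_{n\in I}\phi(n)$. Let $M=\lfloor(N/r)^{2/3}\rfloor$ and suppose $M\ge5$. Then $$|\mathbb E(a_q)|^2\le\frac5M+\frac2{M^2}\sum_{1\le i\ne j\le M}|\mathbb E(A_{(ir,jr)})|,$$ where $A_{(ir,jr)}(n):=a_Q(n+ir)\overline{a_Q(n+jr)}$.
   Context: The sums over $I$ are over integers $n\in I$. *)

theory Defs
  imports Complex_Main
begin

definition avg :: "real set \<Rightarrow> real \<Rightarrow> (int \<Rightarrow> complex) \<Rightarrow> complex" where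
  "avg I N \<phi> = (1 / of_real N) * (\<Sum>n\<in>{n::int. real_of_int n \<in> I}. \<phi> n)"

definition interval_of_length :: "real set \<Rightarrow> real \<Rightarrow> bool" where
  "interval_of_length I N \<longleftrightarrow> (\<exists>a b. b - a = N \<and>
     (I = {a..b} \<or> I = {a<..b} \<or> I = {a..<b} \<or> I = {a<..<b}))"

end

theory Submission
  imports Defs "HOL-Analysis.Analysis"
begin


lemma cs_complex:
  fixes x y :: "'a \<Rightarrow> complex"
  shows "(norm (\<Sum>n\<in>X. x n * y n))^2 \<le> (\<Sum>n\<in>X. (norm (x n))^2) * (\<Sum>n\<in>X. (norm (y n))^2)"
proof -
  have "norm (\<Sum>n\<in>X. x n * y n) \<le> (\<Sum>n\<in>X. norm (x n) * norm (y n))"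
    by (metis (no_types, lifting) norm_mult norm_sum sum.cong)
  hence "(norm (\<Sum>n\<in>X. x n * y n))^2 \<le> (\<Sum>n\<in>X. norm (x n) * norm (y n))^2"
    by (simp add: power_mono)
  also have "\<dots> \<le> (\<Sum>n\<in>X. (norm (x n))^2) * (\<Sum>n\<in>X. (norm (y n))^2)"
    by (rule Cauchy_Schwarz_ineq_sum)
  finally show ?thesis .
qed

lemma sum_diff_bound:
  fixes f :: "'a \<Rightarrow> complex"
  assumes "finite X" "finite Y" "\<And>n. norm (f n) \<le> 1"
  shows "norm (sum f X - sum f Y) \<le> real (card (X - Y)) + real (card (Y - X))"
proof -
  have "sum f X = sum f (X \<inter> Y) + sum f (X - Y)" using assms(1) by (metis sum.Int_Diff)
  moreover have "sum f Y = sum f (X \<inter> Y) + sum f (Y - X)" using assms(2)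
    by (metis Int_commute sum.Int_Diff)
  ultimately have "sum f X - sum f Y = sum f (X - Y) - sum f (Y - X)" by simp
  hence "norm (sum f X - sum f Y) \<le> norm (sum f (X - Y)) + norm (sum f (Y - X))"
    by (simp add: norm_triangle_ineq4)
  also have "norm (sum f (X - Y)) \<le> (\<Sum>n\<in>X-Y. 1)" by (rule sum_norm_le) (use assms in auto)
  also have "norm (sum f (Y - X)) \<le> (\<Sum>n\<in>Y-X. 1)" by (rule sum_norm_le) (use assms in auto)
  finally show ?thesis by simp
qed

lemma Re_mult_cnj: "Re (w * cnj w) = (norm w)^2"
  by (metis Re_complex_of_real complex_norm_square)

lemma expand:
  fixes z :: "nat \<Rightarrow> int \<Rightarrow> complex"
  assumes "finite X" "finite J"
  shows "(\<Sum>n\<in>X. (norm (\<Sum>i\<in>J. z i n))^2) \<le> (\<Sum>i\<in>J. \<Sum>n\<in>X. (norm (z i n))^2)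
     + (\<Sum>i\<in>J. \<Sum>j\<in>J-{i}. norm (\<Sum>n\<in>X. z i n * cnj (z j n)))"
proof -
  have e1: "(norm (\<Sum>i\<in>J. z i n))^2 = Re (\<Sum>i\<in>J. \<Sum>j\<in>J. z i n * cnj (z j n))" for n
  proof -
    have "complex_of_real ((norm (\<Sum>i\<in>J. z i n))^2) = (\<Sum>i\<in>J. z i n) * cnj (\<Sum>i\<in>J. z i n)"
      by (rule complex_norm_square)
    also have "\<dots> = (\<Sum>i\<in>J. \<Sum>j\<in>J. z i n * cnj (z j n))"
      by (simp add: cnj_sum sum_product)
    finally show ?thesis by (metis Re_complex_of_real)
  qed
  have "(\<Sum>n\<in>X. (norm (\<Sum>i\<in>J. z i n))^2) = Re (\<Sum>n\<in>X. \<Sum>i\<in>J. \<Sum>j\<in>J. z i n * cnj (z j n))"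
    by (simp add: e1 Re_sum)
  also have "(\<Sum>n\<in>X. \<Sum>i\<in>J. \<Sum>j\<in>J. z i n * cnj (z j n)) = (\<Sum>i\<in>J. \<Sum>j\<in>J. \<Sum>n\<in>X. z i n * cnj (z j n))"
    by (simp add: sum.swap[of _ X] sum.swap[of _ X J])
  also have "\<dots> = (\<Sum>i\<in>J. (\<Sum>n\<in>X. z i n * cnj (z i n)) + (\<Sum>j\<in>J-{i}. \<Sum>n\<in>X. z i n * cnj (z j n)))"
    by (rule sum.cong) (auto simp: assms sum.remove)
  also have "Re \<dots> = (\<Sum>i\<in>J. \<Sum>n\<in>X. (norm (z i n))^2) + (\<Sum>i\<in>J. Re (\<Sum>j\<in>J-{i}. \<Sum>n\<in>X. z i n * cnj (z j n)))"
    by (simp only: Re_sum sum.distrib Re_mult_cnj plus_complex.sel)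
  also have "(\<Sum>i\<in>J. Re (\<Sum>j\<in>J-{i}. \<Sum>n\<in>X. z i n * cnj (z j n))) \<le> (\<Sum>i\<in>J. \<Sum>j\<in>J-{i}. norm (\<Sum>n\<in>X. z i n * cnj (z j n)))"
  proof (rule sum_mono)
    fix i
    have "Re (\<Sum>j\<in>J-{i}. \<Sum>n\<in>X. z i n * cnj (z j n)) \<le> norm (\<Sum>j\<in>J-{i}. \<Sum>n\<in>X. z i n * cnj (z j n))"
      by (rule complex_Re_le_cmod)
    also have "\<dots> \<le> (\<Sum>j\<in>J-{i}. norm (\<Sum>n\<in>X. z i n * cnj (z j n)))" by (rule norm_sum)
    finally show "Re (\<Sum>j\<in>J-{i}. \<Sum>n\<in>X. z i n * cnj (z j n)) \<le> (\<Sum>j\<in>J-{i}. norm (\<Sum>n\<in>X. z i n * cnj (z j n)))" .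
  qed
  finally show ?thesis by simp
qed



lemma per_mult:
  assumes "\<And>n. ar (n + int r) = ar n"
  shows "ar (n + int (i * r)) = ar n"
proof (induction i)
  case (Suc i)
  have "ar (n + int (Suc i * r)) = ar ((n + int (i * r)) + int r)" by (simp add: algebra_simps)
  also have "\<dots> = ar (n + int (i*r))" by (rule assms)
  finally show ?case using Suc by simp
qed simp

lemma shift_sum:
  fixes f :: "int \<Rightarrow> complex"
  shows "(\<Sum>n\<in>{A..B}. f (n + k)) = (\<Sum>m\<in>{A+k..B+k}. f m)"
proof -
  have "(\<Sum>m\<in>(\<lambda>n. n + k) ` {A..B}. f m) = (\<Sum>n\<in>{A..B}. f (n + k))"
    by (subst sum.reindex) (auto simp: inj_on_def)
  thus ?thesis by simp
qed

lemma shift_err: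
  fixes f :: "int \<Rightarrow> complex"
  assumes "\<And>n. norm (f n) \<le> 1" "k \<ge> 0"
  shows "norm ((\<Sum>n\<in>{A..B}. f n) - (\<Sum>n\<in>{A..B}. f (n + k))) \<le> 2 * real_of_int k"
proof -
  have "norm ((\<Sum>n\<in>{A..B}. f n) - (\<Sum>n\<in>{A+k..B+k}. f n)) \<le> real (card ({A..B} - {A+k..B+k})) + real (card ({A+k..B+k} - {A..B}))"
    by (rule sum_diff_bound) (use assms in auto)
  moreover have "card ({A..B} - {A+k..B+k}) \<le> card {A..<A+k}"
    by (rule card_mono) (use assms in auto)
  moreover have "card ({A+k..B+k} - {A..B}) \<le> card {B<..B+k}"
    by (rule card_mono) (use assms in auto)
  ultimately show ?thesis using assms(2) by (simp add: shift_sum)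
qed

lemma gauss_real: "(\<Sum>i\<in>{1..M}. real i) * 2 = real M * (real M + 1)"
  by (induction M) (auto simp: algebra_simps)



lemma arith1:
  fixes s t u K N M S r :: real
  assumes M7: "M \<ge> 7" and N0: "N > 0" and K0: "K \<ge> 0" and KN: "K \<le> N + 1" and r1: "r \<ge> 1"
    and rM: "r^2 * M^3 \<le> N^2" and u: "u = r * M * (M + 1)" and Ms: "M * s \<le> t + u"
    and s0: "s \<ge> 0" and t0: "t \<ge> 0" and t2: "t^2 \<le> K * (M * K + S)" and S0: "S \<ge> 0"
  shows "M^2 * s^2 \<le> 5 * M * N^2 + 2 * N * S"
proof -
  have "(7::real)^3 \<le> M^3" using M7 by (intro power_mono) auto
  moreover have "1 * M^3 \<le> r^2 * M^3" using r1 M7 by (intro mult_right_mono) (auto simp: one_le_power)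
  ultimately have "343 \<le> N^2" using rM by simp
  hence N18: "N \<ge> 18"
  proof -
    { assume "N < 18" hence "N^2 < 18^2" using N0 by (intro power_strict_mono) auto
      hence False using \<open>343 \<le> N^2\<close> by simp }
    thus ?thesis by force
  qed
  have KN': "K \<le> 19/18 * N" using KN N18 by simp
  have u0: "u \<ge> 0" using u r1 M7 by simp
  have "M^2 * s^2 = (M * s)^2" by (simp add: power_mult_distrib)
  also have "\<dots> \<le> (t + u)^2" using Ms s0 M7 by (intro power_mono) auto
  also have "\<dots> \<le> 189/100 * t^2 + 189/89 * u^2"
  proof -
    have "189/100 * t^2 + 189/89 * u^2 - (t + u)^2 = (89*t - 100*u)^2 / 8900"
      by (simp add: power2_eq_square field_simps) 
    thus ?thesis by (smt (verit) zero_le_power2 divide_nonneg_pos)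
  qed
  also have "189/100 * t^2 \<le> 189/100 * (M * K^2) + 189/100 * K * S"
    using t2 by (simp add: power2_eq_square algebra_simps)
  also have "189/100 * K * S \<le> 2 * N * S"
    using KN' S0 N0 by (intro mult_right_mono) auto
  also have "189/100 * (M * K^2) \<le> 189/100 * (M * ((19/18)^2 * N^2))"
  proof -
    have "K^2 \<le> (19/18 * N)^2" using KN' K0 by (intro power_mono) auto
    also have "(19/18 * N)^2 = (19/18)^2 * N^2" by (rule power_mult_distrib)
    finally have "K^2 \<le> (19/18)^2 * N^2" .
    thus ?thesis using M7 by (intro mult_left_mono) auto
  qed
  also have "189/89 * u^2 \<le> 189/89 * (64/49 * M * N^2)"
  proof -
    have "u^2 * M = (r^2 * M^3) * (M+1)^2" by (simp add: u power2_eq_square power3_eq_cube)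
    also have "\<dots> \<le> N^2 * (M+1)^2" using rM by (intro mult_right_mono) auto
    also have "\<dots> \<le> N^2 * (64/49 * M^2)"
    proof -
      have "(M+1)^2 \<le> (8/7*M)^2" using M7 by (intro power_mono) auto
      also have "(8/7*M)^2 = 64/49 * M^2" by (simp add: power_mult_distrib power2_eq_square)
      finally show ?thesis by (intro mult_left_mono) auto
    qed
    finally have "u^2 * M \<le> (64/49 * M * N^2) * M" by (simp add: power2_eq_square algebra_simps)
    hence "u^2 \<le> 64/49 * M * N^2" using M7 by (simp add: mult_le_cancel_right algebra_simps)
    thus ?thesis by simp
  qed
  finally have "M^2 * s^2 \<le> 189/100 * (M * ((19/18)^2 * N^2)) + 2 * N * S + 189/89 * (64/49 * M * N^2)" by simp
  also have "\<dots> \<le> 5 * M * N^2 + 2 * N * S"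
  proof -
    have "189/100 * (M * ((19/18)^2 * N^2)) + 189/89 * (64/49 * M * N^2) = (189/100 * (19/18)^2 + 189/89 * 64/49) * (M * N^2)"
      by (simp add: algebra_simps)
    also have "\<dots> \<le> 5 * (M * N^2)" using M7 by (intro mult_right_mono) (auto simp: power2_eq_square)
    finally show ?thesis by simp
  qed
  finally show ?thesis .
qed



lemma approach1:
  fixes r M :: nat and aq ar aQ :: "int \<Rightarrow> complex" and A B :: int and N :: real
  assumes r1: "r \<ge> 1" and perr: "\<And>n. ar (n + int r) = ar n"
    and nq: "\<And>n. norm (aq n) \<le> 1" and nr: "\<And>n. norm (ar n) \<le> 1" and nQ: "\<And>n. norm (aQ n) \<le> 1"
    and prod: "\<And>n. aq n = ar n * aQ n"
    and N0: "N > 0" and KN: "real (card {A..B}) \<le> N + 1" and rM: "real r^2 * real M^3 \<le> N^2"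
    and M7: "M \<ge> 7"
  shows "real M^2 * (norm (\<Sum>n\<in>{A..B}. aq n))^2 \<le> 5 * real M * N^2 + 2 * N *
     (\<Sum>i\<in>{1..M}. \<Sum>j\<in>{1..M} - {i}. norm (\<Sum>n\<in>{A..B}. aQ (n + int (i * r)) * cnj (aQ (n + int (j * r)))))"
proof -
  define Z where "Z = {A..B}"
  define K where "K = real (card Z)"
  define S where "S = (\<Sum>n\<in>Z. aq n)"
  define F where "F n = (\<Sum>i\<in>{1..M}. aQ (n + int (i * r)))" for n
  define T where "T = (\<Sum>n\<in>Z. ar n * F n)"
  define S0 where "S0 = (\<Sum>i\<in>{1..M}. \<Sum>j\<in>{1..M} - {i}. norm (\<Sum>n\<in>Z. aQ (n + int (i * r)) * cnj (aQ (n + int (j * r)))))"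
  define u where "u = real r * real M * (real M + 1)"
  have finZ: "finite Z" by (simp add: Z_def)
  have T_eq: "T = (\<Sum>i\<in>{1..M}. \<Sum>n\<in>Z. aq (n + int (i * r)))"
  proof -
    have "T = (\<Sum>n\<in>Z. \<Sum>i\<in>{1..M}. ar n * aQ (n + int (i * r)))"
      by (simp add: T_def F_def sum_distrib_left)
    also have "\<dots> = (\<Sum>i\<in>{1..M}. \<Sum>n\<in>Z. ar n * aQ (n + int (i * r)))" by (rule sum.swap)
    also have "\<dots> = (\<Sum>i\<in>{1..M}. \<Sum>n\<in>Z. aq (n + int (i * r)))"
      by (intro sum.cong refl) (simp only: prod per_mult[where ar=ar and r=r, OF perr])
    finally show ?thesis .
  qed
  have "of_nat M * S - T = (\<Sum>i\<in>{1..M}. S - (\<Sum>n\<in>Z. aq (n + int (i * r))))"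
    by (simp add: T_eq sum_subtractf)
  hence "norm (of_nat M * S - T) \<le> (\<Sum>i\<in>{1..M}. norm (S - (\<Sum>n\<in>Z. aq (n + int (i * r)))))"
    by (simp add: norm_sum)
  also have "\<dots> \<le> (\<Sum>i\<in>{1..M}. 2 * (real r * real i))"
  proof (rule sum_mono)
    fix i
    have "norm (S - (\<Sum>n\<in>Z. aq (n + int (i * r)))) \<le> 2 * real_of_int (int (i * r))"
      unfolding S_def Z_def by (rule shift_err) (use nq in auto)
    thus "norm (S - (\<Sum>n\<in>Z. aq (n + int (i * r)))) \<le> 2 * (real r * real i)" by (simp add: mult.commute)
  qed
  also have "\<dots> = real r * ((\<Sum>i\<in>{1..M}. real i) * 2)"
    by (simp add: sum_distrib_left algebra_simps)
  also have "\<dots> = u" unfolding gauss_real u_def by simp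
  finally have Eb: "norm (of_nat M * S - T) \<le> u" .
  have Ms: "real M * norm S \<le> norm T + u"
  proof -
    have "real M * norm S = norm (of_nat M * S)" by (simp add: norm_mult)
    also have "\<dots> \<le> norm T + norm (of_nat M * S - T)" by (metis norm_triangle_sub)
    finally show ?thesis using Eb by simp
  qed
  have sq1: "(\<Sum>n\<in>Z. (norm (ar n))^2) \<le> K"
  proof -
    have "(\<Sum>n\<in>Z. (norm (ar n))^2) \<le> (\<Sum>n\<in>Z. 1)"
      by (rule sum_mono) (simp add: nr power_le_one)
    thus ?thesis by (simp add: K_def)
  qed
  have sq2: "(\<Sum>n\<in>Z. (norm (F n))^2) \<le> real M * K + S0"
  proof -
    have "(\<Sum>n\<in>Z. (norm (F n))^2) \<le> (\<Sum>i\<in>{1..M}. \<Sum>n\<in>Z. (norm (aQ (n + int (i * r))))^2) + S0"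
      unfolding F_def S0_def by (rule expand) (auto simp: finZ)
    also have "(\<Sum>i\<in>{1..M}. \<Sum>n\<in>Z. (norm (aQ (n + int (i * r))))^2) \<le> (\<Sum>i\<in>{1..M}. K)"
    proof (rule sum_mono)
      fix i
      have "(\<Sum>n\<in>Z. (norm (aQ (n + int (i * r))))^2) \<le> (\<Sum>n\<in>Z. 1)"
        by (rule sum_mono) (simp add: nQ power_le_one)
      thus "(\<Sum>n\<in>Z. (norm (aQ (n + int (i * r))))^2) \<le> K" by (simp add: K_def)
    qed
    finally show ?thesis by simp
  qed
  have t2: "(norm T)^2 \<le> K * (real M * K + S0)"
  proof -
    have "(norm T)^2 \<le> (\<Sum>n\<in>Z. (norm (ar n))^2) * (\<Sum>n\<in>Z. (norm (F n))^2)"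
      unfolding T_def by (rule cs_complex)
    also have "\<dots> \<le> K * (real M * K + S0)"
      using sq1 sq2 by (intro mult_mono) (auto simp: K_def sum_nonneg)
    finally show ?thesis .
  qed
  have S00: "S0 \<ge> 0" by (simp add: S0_def sum_nonneg)
  have "real M^2 * (norm S)^2 \<le> 5 * real M * N^2 + 2 * N * S0"
    by (rule arith1[OF _ N0 _ _ _ _ u_def Ms _ _ t2 S00]) (use M7 r1 KN rM in \<open>auto simp: K_def Z_def\<close>)
  thus ?thesis by (simp add: S_def S0_def Z_def)
qed



lemma arith2:
  fixes s X K N M S r c :: real
  assumes M1: "M \<ge> 1" and N0: "N > 0" and K0: "K \<ge> 0" and KN: "K \<le> N + 1" and r1: "r \<ge> 1"
    and rc: "r \<le> c * N" and c0: "c \<ge> 0" and c1: "1 + M * c \<le> 2"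
    and c2: "(1 + M * c) * (M * (1 + c) + c * (M - 1) * M * (M + 1)) \<le> 5 * M"
    and X0: "X \<ge> 0" and XK: "X \<le> K + (M - 1) * r"
    and main: "M^2 * s^2 \<le> X * (M * K + S + r * (M - 1) * M * (M + 1))" and S0: "S \<ge> 0"
  shows "M^2 * s^2 \<le> 5 * M * N^2 + 2 * N * S"
proof -
  have KN': "K \<le> (1 + c) * N" using KN r1 rc by (simp add: algebra_simps)
  have "(M - 1) * r \<le> (M - 1) * (c * N)" using M1 rc by (intro mult_left_mono) auto
  hence XN: "X \<le> (1 + M * c) * N" using XK KN' by (simp add: algebra_simps)
  have Y0: "M * K + r * (M - 1) * M * (M + 1) \<ge> 0" using M1 K0 r1 by simp
  have "M * K + r * (M - 1) * M * (M + 1) \<le> M * ((1 + c) * N) + (c * N) * (M - 1) * M * (M + 1)"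
  proof -
    have "M * K \<le> M * ((1 + c) * N)" using KN' M1 by (intro mult_left_mono) auto
    moreover have "r * ((M - 1) * M * (M + 1)) \<le> (c * N) * ((M - 1) * M * (M + 1))"
      using rc M1 by (intro mult_right_mono) auto
    ultimately show ?thesis by (simp add: algebra_simps)
  qed
  also have "\<dots> = (M * (1 + c) + c * (M - 1) * M * (M + 1)) * N" by (simp add: algebra_simps)
  finally have YN: "M * K + r * (M - 1) * M * (M + 1) \<le> (M * (1 + c) + c * (M - 1) * M * (M + 1)) * N" .
  have "M^2 * s^2 \<le> X * (M * K + r * (M - 1) * M * (M + 1)) + X * S"
    using main by (simp add: algebra_simps)
  also have "X * (M * K + r * (M - 1) * M * (M + 1)) \<le> ((1 + M * c) * N) * ((M * (1 + c) + c * (M - 1) * M * (M + 1)) * N)"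
    using XN YN X0 Y0 by (intro mult_mono) auto
  also have "\<dots> = ((1 + M * c) * (M * (1 + c) + c * (M - 1) * M * (M + 1))) * N^2"
    by (simp add: power2_eq_square algebra_simps)
  also have "\<dots> \<le> (5 * M) * N^2" using c2 by (intro mult_right_mono) auto
  also have "X * S \<le> (2 * N) * S" using XN c1 N0 S0
    by (intro mult_right_mono) (auto intro: order.trans[OF XN] mult_right_mono)
  finally show ?thesis by simp
qed

lemma r_bound:
  fixes r N M c :: real
  assumes "r^2 * M^3 \<le> N^2" "N > 0" "r \<ge> 0" "1 \<le> c^2 * M^3" "c \<ge> 0" "M > 0"
  shows "r \<le> c * N"
proof (rule ccontr)
  assume "\<not> r \<le> c * N"
  hence "c * N < r" by simp
  hence "(c * N)^2 < r^2" using assms by (intro power_strict_mono) auto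
  hence "(c * N)^2 * M^3 < r^2 * M^3" by (intro mult_strict_right_mono) (use assms in \<open>auto\<close>)
  also have "(c * N)^2 * M^3 = N^2 * (c^2 * M^3)" by (simp add: power_mult_distrib algebra_simps)
  finally have "N^2 * (c^2 * M^3) < N^2" using assms(1) by simp
  moreover have "N^2 * 1 \<le> N^2 * (c^2 * M^3)" using assms by (intro mult_left_mono) auto
  ultimately show False by simp
qed



lemma filt_shift:
  fixes A B a m \<rho> :: int
  assumes "\<rho> \<le> a" "a \<le> m"
  shows "{n \<in> {A - m..B - \<rho>}. n + a \<in> {A..B}} = {A - a..B - a}"
  using assms by auto

lemma card_WZ_aux:
  fixes A B a b m \<rho> :: int
  assumes "0 \<le> a" "a \<le> b" "\<rho> \<le> a" "b \<le> m"
  shows "real (card ({n \<in> {A - m..B - \<rho>}. n + a \<in> {A..B} \<and> n + b \<in> {A..B}} - {A..B}))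
       + real (card ({A..B} - {n \<in> {A - m..B - \<rho>}. n + a \<in> {A..B} \<and> n + b \<in> {A..B}})) \<le> real_of_int a + real_of_int b"
proof -
  have "card ({n \<in> {A - m..B - \<rho>}. n + a \<in> {A..B} \<and> n + b \<in> {A..B}} - {A..B}) \<le> card {A - a..<A}"
    by (rule card_mono) (use assms in auto)
  moreover have "card ({A..B} - {n \<in> {A - m..B - \<rho>}. n + a \<in> {A..B} \<and> n + b \<in> {A..B}}) \<le> card {B - b<..B}"
    by (rule card_mono) (use assms in auto)
  ultimately show ?thesis using assms by simp
qed

lemma card_WZ:
  fixes A B a b m \<rho> :: int
  assumes "0 \<le> a" "0 \<le> b" "\<rho> \<le> a" "\<rho> \<le> b" "a \<le> m" "b \<le> m"
  shows "real (card ({n \<in> {A - m..B - \<rho>}. n + a \<in> {A..B} \<and> n + b \<in> {A..B}} - {A..B}))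
       + real (card ({A..B} - {n \<in> {A - m..B - \<rho>}. n + a \<in> {A..B} \<and> n + b \<in> {A..B}})) \<le> real_of_int a + real_of_int b"
proof (cases "a \<le> b")
  case True
  thus ?thesis using card_WZ_aux[of a b \<rho> m A B] assms by simp
next
  case False
  have e: "{n \<in> {A - m..B - \<rho>}. n + a \<in> {A..B} \<and> n + b \<in> {A..B}} = {n \<in> {A - m..B - \<rho>}. n + b \<in> {A..B} \<and> n + a \<in> {A..B}}"
    by blast
  show ?thesis unfolding e using card_WZ_aux[of b a \<rho> m A B] assms False by simp
qed

lemma pair_sum:
  "(\<Sum>i\<in>{1..M}. \<Sum>j\<in>{1..M} - {i}. real (i * r) + real (j * r)) = real r * (real M - 1) * real M * (real M + 1)"
proof -
  have inner: "(\<Sum>j\<in>{1..M} - {i}. real (i * r) + real (j * r)) = real M * real i * real r + real r * (\<Sum>j\<in>{1..M}. real j) - 2 * real i * real r"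
    if "i \<in> {1..M}" for i
  proof -
    have "(\<Sum>j\<in>{1..M} - {i}. real (i * r) + real (j * r)) = (\<Sum>j\<in>{1..M}. real (i * r) + real (j * r)) - (real (i * r) + real (i * r))"
      using that by (simp add: sum_diff1)
    also have "(\<Sum>j\<in>{1..M}. real (i * r) + real (j * r)) = real M * real i * real r + real r * (\<Sum>j\<in>{1..M}. real j)"
      by (simp add: sum.distrib sum_distrib_left mult.commute)
    finally show ?thesis by simp
  qed
  have "(\<Sum>i\<in>{1..M}. \<Sum>j\<in>{1..M} - {i}. real (i * r) + real (j * r))
     = (\<Sum>i\<in>{1..M}. real M * real i * real r + real r * (\<Sum>j\<in>{1..M}. real j) - 2 * real i * real r)"
    by (rule sum.cong[OF refl]) (rule inner)
  also have "\<dots> = (real M * real r - 2 * real r) * (\<Sum>i\<in>{1..M}. real i) + real M * real r * (\<Sum>j\<in>{1..M}. real j)"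
    by (simp add: sum_subtractf sum.distrib sum_distrib_left sum_distrib_right algebra_simps)
  also have "\<dots> = real r * (real M - 1) * ((\<Sum>i\<in>{1..M}. real i) * 2)"
    by (simp add: algebra_simps)
  also have "\<dots> = real r * (real M - 1) * real M * (real M + 1)"
    unfolding gauss_real by simp
  finally show ?thesis .
qed



lemma approach2:
  fixes r M :: nat and aq ar aQ :: "int \<Rightarrow> complex" and A B :: int
  assumes r1: "r \<ge> 1" and M1: "M \<ge> 1" and perr: "\<And>n. ar (n + int r) = ar n"
    and nr: "\<And>n. norm (ar n) \<le> 1" and nQ: "\<And>n. norm (aQ n) \<le> 1"
    and prod: "\<And>n. aq n = ar n * aQ n"
  shows "real M^2 * (norm (\<Sum>n\<in>{A..B}. aq n))^2 \<le> real (card {A - int (M * r)..B - int r}) *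
     (real M * real (card {A..B}) + (\<Sum>i\<in>{1..M}. \<Sum>j\<in>{1..M} - {i}. norm (\<Sum>n\<in>{A..B}. aQ (n + int (i * r)) * cnj (aQ (n + int (j * r)))))
      + real r * (real M - 1) * real M * (real M + 1))"
proof -
  define Z where "Z = {A..B}"
  define J where "J = {A - int (M * r)..B - int r}"
  define K where "K = real (card Z)"
  define S where "S = (\<Sum>n\<in>Z. aq n)"
  define g where "g i n = (if n + int (i * r) \<in> Z then aQ (n + int (i * r)) else 0)" for i n
  define G where "G n = (\<Sum>i\<in>{1..M}. g i n)" for n
  define Aij where "Aij i j n = aQ (n + int (i * r)) * cnj (aQ (n + int (j * r)))" for i j n
  define S0 where "S0 = (\<Sum>i\<in>{1..M}. \<Sum>j\<in>{1..M} - {i}. norm (\<Sum>n\<in>Z. Aij i j n))"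
  have finJ: "finite J" by (simp add: J_def)
  have perI: "ar (n + int i * int r) = ar n" for n i
    using per_mult[where ar=ar and r=r, OF perr, of n i] by simp
  have ib: "int r \<le> int (i * r) \<and> int (i * r) \<le> int (M * r) \<and> 0 \<le> int (i * r)" if "i \<in> {1..M}" for i
  proof -
    have "1 * r \<le> i * r" "i * r \<le> M * r" using that by (intro mult_right_mono; simp)+
    thus ?thesis by (simp only: of_nat_le_iff of_nat_0_le_iff mult_1 simp_thms)
  qed
  have filt: "{n \<in> J. n + int (i * r) \<in> Z} = {A - int (i * r)..B - int (i * r)}" if "i \<in> {1..M}" for i
    unfolding J_def Z_def by (rule filt_shift) (use ib[OF that] in auto)
  have MS: "of_nat M * S = (\<Sum>n\<in>J. ar n * G n)"
  proof -
    have "(\<Sum>n\<in>J. ar n * G n) = (\<Sum>i\<in>{1..M}. \<Sum>n\<in>J. ar n * g i n)"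
      by (simp add: G_def sum_distrib_left sum.swap[of _ J])
    also have "\<dots> = (\<Sum>i\<in>{1..M}. S)"
    proof (rule sum.cong[OF refl])
      fix i assume i: "i \<in> {1..M}"
      have "(\<Sum>n\<in>J. ar n * g i n) = (\<Sum>n\<in>J. if n + int (i * r) \<in> Z then aq (n + int (i * r)) else 0)"
        by (intro sum.cong refl) (simp add: g_def prod perI)
      also have "\<dots> = (\<Sum>n\<in>{n \<in> J. n + int (i * r) \<in> Z}. aq (n + int (i * r)))"
        by (rule sum.inter_filter[OF finJ, symmetric])
      also have "\<dots> = (\<Sum>n\<in>{A - int (i * r)..B - int (i * r)}. aq (n + int (i * r)))"
        by (simp only: filt[OF i])
      also have "\<dots> = S" by (simp add: shift_sum S_def Z_def)
      finally show "(\<Sum>n\<in>J. ar n * g i n) = S" .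
    qed
    also have "\<dots> = of_nat M * S" by simp
    finally show ?thesis by simp
  qed
  have sq1: "(\<Sum>n\<in>J. (norm (ar n))^2) \<le> real (card J)"
  proof -
    have "(\<Sum>n\<in>J. (norm (ar n))^2) \<le> (\<Sum>n\<in>J. 1)"
      by (rule sum_mono) (simp add: nr power_le_one)
    thus ?thesis by simp
  qed
  have diag: "(\<Sum>n\<in>J. (norm (g i n))^2) \<le> K" if i: "i \<in> {1..M}" for i
  proof -
    have "(\<Sum>n\<in>J. (norm (g i n))^2) \<le> (\<Sum>n\<in>J. if n + int (i * r) \<in> Z then 1 else 0)"
      by (rule sum_mono) (simp add: g_def nQ power_le_one)
    also have "\<dots> = real (card {n \<in> J. n + int (i * r) \<in> Z})"
      by (simp add: sum.inter_filter[symmetric] finJ)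
    also have "\<dots> = K" unfolding filt[OF i] unfolding K_def Z_def by simp
    finally show ?thesis .
  qed
  have offd: "norm (\<Sum>n\<in>J. g i n * cnj (g j n)) \<le> norm (\<Sum>n\<in>Z. Aij i j n) + (real (i * r) + real (j * r))"
    if i: "i \<in> {1..M}" and j: "j \<in> {1..M}" for i j
  proof -
    define W where "W = {n \<in> J. n + int (i * r) \<in> Z \<and> n + int (j * r) \<in> Z}"
    have "(\<Sum>n\<in>J. g i n * cnj (g j n)) = (\<Sum>n\<in>J. if n + int (i * r) \<in> Z \<and> n + int (j * r) \<in> Z then Aij i j n else 0)"
      by (intro sum.cong refl) (simp add: g_def Aij_def)
    also have "\<dots> = (\<Sum>n\<in>W. Aij i j n)" by (simp add: sum.inter_filter finJ W_def)
    finally have e: "(\<Sum>n\<in>J. g i n * cnj (g j n)) = (\<Sum>n\<in>W. Aij i j n)" .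
    have nA: "norm (Aij i j n) \<le> 1" for n
      unfolding Aij_def norm_mult complex_mod_cnj using nQ by (meson mult_le_one norm_ge_zero)
    have "norm ((\<Sum>n\<in>W. Aij i j n) - (\<Sum>n\<in>Z. Aij i j n)) \<le> real (card (W - Z)) + real (card (Z - W))"
      by (rule sum_diff_bound) (auto simp: W_def finJ Z_def nA)
    also have "\<dots> \<le> real_of_int (int (i * r)) + real_of_int (int (j * r))"
      unfolding W_def J_def Z_def by (rule card_WZ) (use ib[OF i] ib[OF j] in auto)
    finally have "norm ((\<Sum>n\<in>W. Aij i j n) - (\<Sum>n\<in>Z. Aij i j n)) \<le> real (i * r) + real (j * r)" by simp
    hence "norm (\<Sum>n\<in>W. Aij i j n) \<le> norm (\<Sum>n\<in>Z. Aij i j n) + (real (i * r) + real (j * r))"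
      by (smt (verit) norm_triangle_ineq2)
    thus ?thesis by (simp add: e)
  qed
  have sq2: "(\<Sum>n\<in>J. (norm (G n))^2) \<le> real M * K + S0 + real r * (real M - 1) * real M * (real M + 1)"
  proof -
    have "(\<Sum>n\<in>J. (norm (G n))^2) \<le> (\<Sum>i\<in>{1..M}. \<Sum>n\<in>J. (norm (g i n))^2) + (\<Sum>i\<in>{1..M}. \<Sum>j\<in>{1..M}-{i}. norm (\<Sum>n\<in>J. g i n * cnj (g j n)))"
      unfolding G_def by (rule expand) (auto simp: finJ)
    also have "(\<Sum>i\<in>{1..M}. \<Sum>n\<in>J. (norm (g i n))^2) \<le> (\<Sum>i\<in>{1..M}. K)"
      by (rule sum_mono) (rule diag)
    also have "(\<Sum>i\<in>{1..M}. \<Sum>j\<in>{1..M}-{i}. norm (\<Sum>n\<in>J. g i n * cnj (g j n)))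
        \<le> (\<Sum>i\<in>{1..M}. \<Sum>j\<in>{1..M}-{i}. norm (\<Sum>n\<in>Z. Aij i j n) + (real (i * r) + real (j * r)))"
      by (intro sum_mono offd) auto
    also have "\<dots> = S0 + (\<Sum>i\<in>{1..M}. \<Sum>j\<in>{1..M} - {i}. real (i * r) + real (j * r))"
      by (simp only: sum.distrib S0_def add.assoc)
    also have "\<dots> = S0 + real r * (real M - 1) * real M * (real M + 1)"
      by (simp only: pair_sum)
    finally show ?thesis by simp
  qed
  have "real M^2 * (norm S)^2 = (norm (\<Sum>n\<in>J. ar n * G n))^2"
    by (simp add: MS[symmetric] norm_mult power_mult_distrib)
  also have "\<dots> \<le> (\<Sum>n\<in>J. (norm (ar n))^2) * (\<Sum>n\<in>J. (norm (G n))^2)"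
    by (rule cs_complex)
  also have "\<dots> \<le> real (card J) * (real M * K + S0 + real r * (real M - 1) * real M * (real M + 1))"
    using sq1 sq2 by (intro mult_mono) (auto simp: sum_nonneg)
  finally show ?thesis by (simp add: S_def Z_def J_def K_def S0_def Aij_def)
qed



lemma int_points:
  assumes "interval_of_length I N"
  shows "\<exists>A B. {n::int. real_of_int n \<in> I} = {A..B} \<and> real_of_int B - real_of_int A \<le> N"
proof -
  obtain a b where ab: "b - a = N" and I: "I = {a..b} \<or> I = {a<..b} \<or> I = {a..<b} \<or> I = {a<..<b}"
    using assms unfolding interval_of_length_def by blast
  have f1: "real_of_int \<lfloor>b\<rfloor> \<le> b" by simp
  have f2: "a \<le> real_of_int \<lceil>a\<rceil>" by simp
  have f3: "a \<le> real_of_int (\<lfloor>a\<rfloor> + 1)" by linarith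
  have f4: "real_of_int (\<lceil>b\<rceil> - 1) \<le> b" by linarith
  have fa: "(\<lfloor>a\<rfloor> + 1 \<le> x) = (a < real_of_int x)" for x :: int
    using floor_less_iff[of a x] by linarith
  have fb: "(x \<le> \<lceil>b\<rceil> - 1) = (real_of_int x < b)" for x :: int
    using less_ceiling_iff[of x b] by linarith
  consider "I = {a..b}" | "I = {a<..b}" | "I = {a..<b}" | "I = {a<..<b}" using I by blast
  thus ?thesis
  proof cases
    case 1
    have "{n::int. real_of_int n \<in> I} = {\<lceil>a\<rceil>..\<lfloor>b\<rfloor>}" by (auto simp: 1 ceiling_le_iff le_floor_iff)
    moreover have "real_of_int (\<lfloor>b\<rfloor>) - real_of_int (\<lceil>a\<rceil>) \<le> N" using f1 f2 ab by linarith
    ultimately show ?thesis by blast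
  next
    case 2
    have "{n::int. real_of_int n \<in> I} = {\<lfloor>a\<rfloor> + 1..\<lfloor>b\<rfloor>}" by (auto simp: 2 le_floor_iff fa) 
    moreover have "real_of_int (\<lfloor>b\<rfloor>) - real_of_int (\<lfloor>a\<rfloor> + 1) \<le> N" using f1 f3 ab by linarith
    ultimately show ?thesis by blast
  next
    case 3
    have "{n::int. real_of_int n \<in> I} = {\<lceil>a\<rceil>..\<lceil>b\<rceil> - 1}" by (auto simp: 3 ceiling_le_iff fb less_ceiling_iff)
    moreover have "real_of_int (\<lceil>b\<rceil> - 1) - real_of_int (\<lceil>a\<rceil>) \<le> N" using f4 f2 ab by linarith
    ultimately show ?thesis by blast
  next
    case 4
    have "{n::int. real_of_int n \<in> I} = {\<lfloor>a\<rfloor> + 1..\<lceil>b\<rceil> - 1}" by (auto simp: 4 fa fb less_ceiling_iff)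
    moreover have "real_of_int (\<lceil>b\<rceil> - 1) - real_of_int (\<lfloor>a\<rfloor> + 1) \<le> N" using f4 f3 ab by linarith
    ultimately show ?thesis by blast
  qed
qed



lemma core:
  fixes r M :: nat and aq ar aQ :: "int \<Rightarrow> complex" and A B :: int and N :: real
  assumes r1: "r \<ge> 1" and perr: "\<And>n. ar (n + int r) = ar n"
    and nq: "\<And>n. norm (aq n) \<le> 1" and nr: "\<And>n. norm (ar n) \<le> 1" and nQ: "\<And>n. norm (aQ n) \<le> 1"
    and prod: "\<And>n. aq n = ar n * aQ n"
    and N0: "N > 0" and KN: "real (card {A..B}) \<le> N + 1" and rM: "real r^2 * real M^3 \<le> N^2"
    and M5: "M \<ge> 5"
  shows "real M^2 * (norm (\<Sum>n\<in>{A..B}. aq n))^2 \<le> 5 * real M * N^2 + 2 * N *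
     (\<Sum>i\<in>{1..M}. \<Sum>j\<in>{1..M} - {i}. norm (\<Sum>n\<in>{A..B}. aQ (n + int (i * r)) * cnj (aQ (n + int (j * r)))))"
proof (cases "M \<ge> 7")
  case True
  show ?thesis by (rule approach1[where ar=ar and aq=aq and aQ=aQ and r=r, OF r1 perr nq nr nQ prod N0 KN rM True])
next
  case False
  define S0 where "S0 = (\<Sum>i\<in>{1..M}. \<Sum>j\<in>{1..M} - {i}. norm (\<Sum>n\<in>{A..B}. aQ (n + int (i * r)) * cnj (aQ (n + int (j * r)))))"
  define X where "X = real (card {A - int (M * r)..B - int r})"
  have S00: "S0 \<ge> 0" by (simp add: S0_def sum_nonneg)
  have main: "real M^2 * (norm (\<Sum>n\<in>{A..B}. aq n))^2 \<le> X * (real M * real (card {A..B}) + S0 + real r * (real M - 1) * real M * (real M + 1))"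
    unfolding X_def S0_def by (rule approach2[where ar=ar and aq=aq and aQ=aQ and r=r, OF r1 _ perr nr nQ prod]) (use M5 in auto)
  have XK: "X \<le> real (card {A..B}) + (real M - 1) * real r"
  proof -
    have "{A - int (M * r)..B - int r} \<subseteq> {A - int (M * r)..<A - int r} \<union> (\<lambda>n. n + (- int r)) ` {A..B}"
      by auto
    hence "card {A - int (M * r)..B - int r} \<le> card ({A - int (M * r)..<A - int r} \<union> (\<lambda>n. n + (- int r)) ` {A..B})"
      by (intro card_mono) auto
    also have "\<dots> \<le> card {A - int (M * r)..<A - int r} + card ((\<lambda>n. n + (- int r)) ` {A..B})"
      by (rule card_Un_le)
    also have "card ((\<lambda>n. n + (- int r)) ` {A..B}) = card {A..B}"
      by (rule card_image) (auto simp: inj_on_def)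
    also have "card {A - int (M * r)..<A - int r} = (M - 1) * r"
    proof -
      have e: "A - int r - (A - int (M * r)) = int ((M - 1) * r)" using M5 by (simp add: of_nat_diff algebra_simps)
      show ?thesis by (simp only: card_atLeastLessThan_int e nat_int)
    qed
    finally have "card {A - int (M * r)..B - int r} \<le> (M - 1) * r + card {A..B}" .
    hence "X \<le> real ((M - 1) * r + card {A..B})" unfolding X_def by linarith
    thus ?thesis using M5 by (simp add: of_nat_diff)
  qed
  have Mc: "M = 5 \<or> M = 6" using False M5 by auto
  have rM': "(real r)^2 * (real M)^3 \<le> N^2" using rM by simp
  show ?thesis
  proof (cases "M = 5")
    case True
    have rc: "real r \<le> 9/100 * N"
      by (rule r_bound[OF rM' N0]) (auto simp: True power2_eq_square)
    show ?thesis unfolding S0_def[symmetric]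
      by (rule arith2[OF _ N0 _ KN _ rc _ _ _ _ XK main S00]) (use r1 in \<open>auto simp: True X_def\<close>)
  next
    case False
    hence M6: "M = 6" using Mc by simp
    have rc: "real r \<le> 69/1000 * N"
      by (rule r_bound[OF rM' N0]) (auto simp: M6 power2_eq_square)
    show ?thesis unfolding S0_def[symmetric]
      by (rule arith2[OF _ N0 _ KN _ rc _ _ _ _ XK main S00]) (use r1 in \<open>auto simp: M6 X_def\<close>)
  qed
qed



lemma final_arith:
  fixes s S N M :: real
  assumes "N > 0" "M > 0" "M^2 * s^2 \<le> 5 * M * N^2 + 2 * N * S"
  shows "(s / N)^2 \<le> 5 / M + 2 / M^2 * (S / N)"
proof -
  have "(s / N)^2 = (M^2 * s^2) / (M^2 * N^2)" using assms by (simp add: power_divide)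
  also have "\<dots> \<le> (5 * M * N^2 + 2 * N * S) / (M^2 * N^2)"
    using assms by (intro divide_right_mono) auto
  also have "\<dots> = 5 / M + 2 / M^2 * (S / N)" using assms by (simp add: field_simps power2_eq_square)
  finally show ?thesis .
qed

theorem lemma6p3:
  fixes r Q q :: nat and aq ar aQ :: "int \<Rightarrow> complex" and I :: "real set" and N :: real
    and M :: nat
  assumes "r \<ge> 1" "Q \<ge> 1" "q = r * Q" "coprime r Q"
    and "\<And>n. aq (n + int q) = aq n"
    and "\<And>n. ar (n + int r) = ar n"
    and "\<And>n. aQ (n + int Q) = aQ n"
    and "\<And>n. norm (aq n) \<le> 1" "\<And>n. norm (ar n) \<le> 1" "\<And>n. norm (aQ n) \<le> 1"
    and "\<And>n. aq n = ar n * aQ n"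
    and "N > 0" "interval_of_length I N"
    and "M = nat \<lfloor>(N / real r) powr (2/3)\<rfloor>"
    and "M \<ge> 5"
  shows "(norm (avg I N aq))^2 \<le> 5 / real M + 2 / (real M)^2 *
     (\<Sum>i\<in>{1..M}. \<Sum>j\<in>{1..M} - {i}.
        norm (avg I N (\<lambda>n. aQ (n + int (i * r)) * cnj (aQ (n + int (j * r))))))"
proof -
  note r1 = assms(1) and perr = assms(6) and nq = assms(8) and nr = assms(9) and nQ = assms(10)
    and prod = assms(11) and N0 = assms(12) and M5 = assms(15)
  obtain A B where AB: "{n::int. real_of_int n \<in> I} = {A..B}" and BA: "real_of_int B - real_of_int A \<le> N"
    using int_points[OF assms(13)] by blast
  have KN: "real (card {A..B}) \<le> N + 1"
  proof (cases "B - A + 1 \<le> 0")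
    case True thus ?thesis using N0 by simp
  next
    case False
    hence "real (card {A..B}) = real_of_int (B - A + 1)" by simp
    thus ?thesis using BA by simp
  qed
  have rM: "real r^2 * real M^3 \<le> N^2"
  proof -
    define x where "x = N / real r"
    have x0: "x > 0" using N0 r1 by (simp add: x_def)
    have fl0: "0 \<le> \<lfloor>x powr (2/3)\<rfloor>" by simp
    have "real M = real_of_int \<lfloor>x powr (2/3)\<rfloor>"
      using fl0 unfolding assms(14) x_def by (simp only: of_nat_nat)
    also have "\<dots> \<le> x powr (2/3)" by (rule of_int_floor_le)
    finally have "real M \<le> x powr (2/3)" .
    hence "real M^3 \<le> (x powr (2/3))^3" by (intro power_mono) auto
    also have "(x powr (2/3))^3 = (x powr (2/3)) powr 3" using powr_realpow[of "x powr (2/3)" 3] x0 by simp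
    also have "\<dots> = x powr 2" by (simp add: powr_powr)
    also have "\<dots> = x^2" using powr_realpow[of x 2] x0 by simp
    finally have "real M^3 \<le> x^2" .
    hence "real r^2 * real M^3 \<le> real r^2 * x^2" by (intro mult_left_mono) auto
    also have "real r^2 * x^2 = N^2" using r1 by (simp add: x_def power_divide)
    finally show ?thesis .
  qed
  have c: "real M^2 * (norm (\<Sum>n\<in>{A..B}. aq n))^2 \<le> 5 * real M * N^2 + 2 * N *
     (\<Sum>i\<in>{1..M}. \<Sum>j\<in>{1..M} - {i}. norm (\<Sum>n\<in>{A..B}. aQ (n + int (i * r)) * cnj (aQ (n + int (j * r)))))"
    by (rule core[where ar=ar and aq=aq and aQ=aQ and r=r, OF r1 perr nq nr nQ prod N0 KN rM M5])
  have navg: "norm (avg I N f) = norm (\<Sum>n\<in>{A..B}. f n) / N" for f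
    using N0 by (simp add: avg_def AB norm_mult norm_divide)
  have "(norm (\<Sum>n\<in>{A..B}. aq n) / N)^2 \<le> 5 / real M + 2 / (real M)^2 *
      ((\<Sum>i\<in>{1..M}. \<Sum>j\<in>{1..M} - {i}. norm (\<Sum>n\<in>{A..B}. aQ (n + int (i * r)) * cnj (aQ (n + int (j * r))))) / N)"
    by (rule final_arith[OF N0 _ c]) (use M5 in auto)
  thus ?thesis by (simp add: navg sum_divide_distrib)
qed

end
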